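(* (1) For every character $\varphi$ of $\mathcal H$, $\varphi\star\delta_\bullet$ is an infinitesimal character of $\mathcal H_{CK}$ (i.e. $\beta(xy)=\beta(x)\varepsilon(y)+\varepsilon(x)\beta(y)$) which coincides with $\varphi$ on nonempty trees (its value on the tree $\bullet$ being $\varphi(\bullet)=1$); the map $\varphi\mapsto\varphi\star\delta_\bullet$ is a bijection between characters of $\mathcal H$ and infinitesimal characters $\beta$ of $\mathcal H_{CK}$ with $\beta(\bullet)=1$. (2) For every character $\varphi$ of $\mathcal H$, $\varphi\star\delta$ is a character of $\mathcal H_{CK}$ which coincides with $\varphi$ on nonempty trees; the map $\varphi\mapsto\varphi\star\delta$ is a bijection between characters of $\mathcal H$ and characters $b$ of $\mathcal H_{CK}$ with $b(\bullet)=1$.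
   Context: Let $k$ be a field of characteristic $0$. Rooted trees are finite and non-planar; $\bullet$ denotes the one-vertex tree. (1) $\mathcal H$ is the free commutative $k$-algebra generated by isomorphism classes of rooted trees with at least one edge, with unit identified with $\bullet$; a character of $\mathcal H$ is a unital algebra morphism $\mathcal H\to k$. A subforest of a rooted tree $t$ is either the trivial subforest $\bullet$ or a nonempty set of pairwise vertex-disjoint subtrees each with at least one edge, identified with the product of its components; $t/s$ is the tree obtained by contracting each component of $s$ to a vertex. (2) $\mathcal H_{CK}$ is the Connes–Kreimer Hopf algebra of rooted forests (free commutative algebra on nonempty rooted trees, unit the empty forest $\mathbf 1$, counit $\varepsilon$, coproduct by admissible cuts); characters of $\mathcal H_{CK}$ are unital algebra morphisms to $k$. $\delta_\bullet\in\mathcal H_{CK}^*$ takes value $1$ on the tree $\bullet$ and $0$ on all other forests; $\delta$ is the character of $\mathcal H_{CK}$ with $\delta(\bullet)=1$ and $\delta(t)=0$ for every tree with at least two vertices. (3) $\Phi:\mathcal H_{CK}\to\mathcal H\otimes\mathcal H_{CK}$ is the algebra morphism with $\Phi(\mathbf 1)=\bullet\otimes\mathbf 1$ and $\Phi(t)=\sum_s s\otimes t/s$ over subforests $s$ of $t$ (with $s\in\mathcal H$, $t/s\in\mathcal H_{CK}$) for each nonempty tree $t$. For $\alpha\in\mathcal H^*$ and $b\in\mathcal H_{CK}^*$, $\alpha\star b=(\alpha\otimes b)\circ\Phi$. *)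

theory Defs
  imports "HOL-Library.Multiset"
begin

text \<open>An isomorphism class of finite non-planar rooted trees is a root together
with a finite multiset of (isomorphism classes of) subtrees hanging from it.\<close>
datatype tree = Node "tree multiset"

definition bullet :: tree where "bullet = Node {#}"

fun kids :: "tree \<Rightarrow> tree multiset" where "kids (Node cs) = cs"

text \<open>A subforest of t corresponds bijectively to a subset of the edge set of t
(its components are the connected components of that edge set; the empty edge set
is the trivial subforest).  We enumerate all edge subsets recursively, with
multiplicity.  For a tree t, sf t is the multiset, over all edge subsets E of t,
of triples (rc, os, q): rc = component of E containing the root (possibly the
one-vertex tree), os = the multiset of the other components (each with at least
one edge), q = the tree t with all edges of E contracted.\<close>

definition close_comp :: "tree \<Rightarrow> tree multiset \<Rightarrow> tree multiset" where
  "close_comp rc os = (if rc = bullet then os else add_mset rc os)"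

type_synonym contrib = "tree multiset \<times> tree multiset \<times> tree multiset"

definition cadd :: "contrib \<Rightarrow> contrib \<Rightarrow> contrib" where
  "cadd a b = (fst a + fst b, fst (snd a) + fst (snd b), snd (snd a) + snd (snd b))"

definition cconv :: "contrib multiset \<Rightarrow> contrib multiset \<Rightarrow> contrib multiset" where
  "cconv A B = sum_mset (image_mset (\<lambda>a. image_mset (cadd a) B) A)"

definition combine :: "contrib multiset multiset \<Rightarrow> contrib multiset" where
  "combine Ms = fold_mset cconv {#({#}, {#}, {#})#} Ms"

text \<open>Options for one child c of the root, given sf c: either the edge root--c is
in the edge set (the root component of c is glued under the root, and in the
quotient the root of c/E is merged into the root), or it is not (the root
component of c is closed off, and c/E becomes a child of the root in the quotient).\<close>
definition child_opts :: "(tree \<times> tree multiset \<times> tree) multiset \<Rightarrow> contrib multiset" where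
  "child_opts X =
     image_mset (\<lambda>(rc, os, q). ({#rc#}, os, kids q)) X +
     image_mset (\<lambda>(rc, os, q). ({#}, close_comp rc os, {#q#})) X"

primrec sf :: "tree \<Rightarrow> (tree \<times> tree multiset \<times> tree) multiset" where
  "sf (Node cs) = image_mset (\<lambda>(rk, os, qk). (Node rk, os, Node qk))
                    (combine (image_mset (\<lambda>c. child_opts (sf c)) cs))"

text \<open>The terms s \<otimes> t/s of Phi(t), over all subforests s of t; s is an element of
the monomial basis of H (a multiset of trees with at least one edge, the empty
multiset being the unit = bullet), t/s a tree.\<close>
definition phi_tree :: "tree \<Rightarrow> (tree multiset \<times> tree) multiset" where
  "phi_tree t = image_mset (\<lambda>(rc, os, q). (close_comp rc os, q)) (sf t)"

text \<open>Basis of H: monomials = finite multisets of trees with at least one edge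
(the empty multiset is the unit, identified with bullet).  Basis of H_CK:
forests = finite multisets of trees (the empty multiset is the empty forest 1).
Linear functionals are given by their values on these bases.\<close>

definition H_monomial :: "tree multiset \<Rightarrow> bool" where
  "H_monomial M \<longleftrightarrow> (\<forall>t\<in>#M. t \<noteq> bullet)"

definition tree_H :: "tree \<Rightarrow> tree multiset" where
  "tree_H t = (if t = bullet then {#} else {#t#})"

text \<open>A character of H: unital multiplicative functional.  Functionals on H are
represented as functions on tree multisets vanishing off the monomial basis.\<close>
definition character_H :: "(tree multiset \<Rightarrow> 'k::field) \<Rightarrow> bool" where
  "character_H \<phi> \<longleftrightarrow>
     (\<forall>M. \<not> H_monomial M \<longrightarrow> \<phi> M = 0) \<and>
     \<phi> {#} = 1 \<and>
     (\<forall>M N. H_monomial M \<longrightarrow> H_monomial N \<longrightarrow> \<phi> (M + N) = \<phi> M * \<phi> N)"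

definition eps_CK :: "tree multiset \<Rightarrow> 'k::field" where
  "eps_CK F = (if F = {#} then 1 else 0)"

definition character_CK :: "(tree multiset \<Rightarrow> 'k::field) \<Rightarrow> bool" where
  "character_CK b \<longleftrightarrow> b {#} = 1 \<and> (\<forall>F G. b (F + G) = b F * b G)"

definition infinitesimal_character_CK :: "(tree multiset \<Rightarrow> 'k::field) \<Rightarrow> bool" where
  "infinitesimal_character_CK \<beta> \<longleftrightarrow>
     (\<forall>F G. \<beta> (F + G) = \<beta> F * eps_CK G + eps_CK F * \<beta> G)"

definition delta_bullet :: "tree multiset \<Rightarrow> 'k::field" where
  "delta_bullet F = (if F = {#bullet#} then 1 else 0)"

definition delta_char :: "tree multiset \<Rightarrow> 'k::field" where
  "delta_char F = (if (\<forall>t\<in>#F. t = bullet) then 1 else 0)"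

definition pconv :: "(tree multiset \<times> tree multiset) multiset \<Rightarrow>
    (tree multiset \<times> tree multiset) multiset \<Rightarrow> (tree multiset \<times> tree multiset) multiset" where
  "pconv A B = sum_mset (image_mset (\<lambda>(s1, f1). image_mset (\<lambda>(s2, f2). (s1 + s2, f1 + f2)) B) A)"

text \<open>Phi on a forest (algebra morphism extension; Phi(1) = bullet \<otimes> 1).\<close>
definition Phi :: "tree multiset \<Rightarrow> (tree multiset \<times> tree multiset) multiset" where
  "Phi F = fold_mset pconv {#({#}, {#})#}
             (image_mset (\<lambda>t. image_mset (\<lambda>(s, q). (s, {#q#})) (phi_tree t)) F)"

definition star :: "(tree multiset \<Rightarrow> 'k::field) \<Rightarrow> (tree multiset \<Rightarrow> 'k) \<Rightarrow> tree multiset \<Rightarrow> 'k" where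
  "star \<alpha> b F = sum_mset (image_mset (\<lambda>(s, f). \<alpha> s * b f) (Phi F))"

end

theory Submission
  imports Defs "HOL-Library.Product_Plus"
begin

definition gconv :: "'a::comm_monoid_add multiset \<Rightarrow> 'a multiset \<Rightarrow> 'a multiset" where
  "gconv A B = sum_mset (image_mset (\<lambda>a. image_mset ((+) a) B) A)"

lemma gconv_empty[simp]: "gconv {#} B = {#}" by (simp add: gconv_def)
lemma gconv_add_mset[simp]: "gconv (add_mset a A) B = image_mset ((+) a) B + gconv A B"
  by (simp add: gconv_def)
lemma gconv_plus: "gconv (A + C) B = gconv A B + gconv C B"
  by (simp add: gconv_def)
lemma gconv_empty2[simp]: "gconv A {#} = {#}" by (induction A) auto
lemma gconv_add_mset2[simp]: "gconv A (add_mset b B) = image_mset (\<lambda>a. a + b) A + gconv A B"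
  by (induction A) (auto simp: add.commute)
lemma gconv_comm: "gconv A B = gconv B A"
  by (induction A) (auto simp: add.commute)
lemma gconv_image: "gconv (image_mset ((+) a) B) C = image_mset ((+) a) (gconv B C)"
  by (induction B) (auto simp: multiset.map_comp comp_def add.assoc intro!: image_mset_cong)
lemma gconv_assoc: "gconv (gconv A B) C = gconv A (gconv B C)"
  by (induction A) (simp_all only: gconv_add_mset gconv_plus gconv_image gconv_empty)
lemma gconv_unit[simp]: "gconv A {#0#} = A" by (induction A) auto

lemma img0[simp]: "image_mset ((+) 0) (M::'a::comm_monoid_add multiset) = M" by (induction M) auto

lemma gconv_cfc: "comp_fun_commute gconv"
  by unfold_locales (simp add: fun_eq_iff, metis gconv_assoc gconv_comm)

lemma fold_gconv_add: "fold_mset gconv z (add_mset x M) = gconv x (fold_mset gconv z M)"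
  by (rule comp_fun_commute.fold_mset_add_mset[OF gconv_cfc])

lemma fold_gconv_plus: "fold_mset gconv {#0#} (M + N) = gconv (fold_mset gconv {#0#} M) (fold_mset gconv {#0#} N)"
  by (induction M) (auto simp: fold_gconv_add gconv_assoc)

lemma gconv_mem: "x \<in># gconv A B \<Longrightarrow> \<exists>a\<in>#A. \<exists>b\<in>#B. x = a + b"
  by (induction A) auto

lemma sum_gconv: fixes g :: "'a::comm_monoid_add \<Rightarrow> 'k::comm_semiring_1"
  assumes "\<And>a b. g (a + b) = g a * g b"
  shows "sum_mset (image_mset g (gconv A B)) = sum_mset (image_mset g A) * sum_mset (image_mset g B)"
proof (induction A)
  case empty then show ?case by simp
next
  case (add a A)
  have "sum_mset (image_mset g (image_mset ((+) a) B)) = g a * sum_mset (image_mset g B)"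
    by (induction B) (auto simp: assms algebra_simps)
  with add show ?case by (simp add: algebra_simps)
qed

lemma filter_gconv: assumes "\<And>a b. P (a + b) \<longleftrightarrow> P a \<and> P b"
  shows "filter_mset P (gconv A B) = gconv (filter_mset P A) (filter_mset P B)"
proof (induction A)
  case empty then show ?case by simp
next
  case (add a A)
  have "filter_mset P (image_mset ((+) a) B) = (if P a then image_mset ((+) a) (filter_mset P B) else {#})"
    by (induction B) (auto simp: assms)
  with add show ?case by simp
qed

lemma cadd_eq: "cadd = (+)" by (auto simp: fun_eq_iff cadd_def plus_prod_def)

lemma cconv_eq: "cconv = gconv"
  by (simp add: fun_eq_iff cconv_def gconv_def cadd_eq)

lemma pc_aux: "(\<lambda>(s2,f2). (s1+s2, f1+f2)) = (+) (s1::'a::comm_monoid_add,f1::'b::comm_monoid_add)"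
  by (auto simp: fun_eq_iff)

lemma pc_aux2: "(\<lambda>(s1,f1). image_mset (\<lambda>(s2,f2). (s1+s2, f1+f2)) B) = (\<lambda>a. image_mset ((+) (a::'a::comm_monoid_add \<times> 'b::comm_monoid_add)) B)"
  by (auto simp: fun_eq_iff pc_aux)

lemma pconv_eq: "pconv = gconv"
  by (simp add: fun_eq_iff pconv_def gconv_def pc_aux2)


lemma combine_alt: "combine Ms = fold_mset gconv {#0#} Ms"
  by (simp add: combine_def cconv_eq zero_prod_def)

lemma filter_fold: assumes "\<And>a b. P (a + b) \<longleftrightarrow> P a \<and> P b" and "P 0"
  shows "filter_mset P (fold_mset gconv {#0#} Ms) = fold_mset gconv {#0#} (image_mset (filter_mset P) Ms)"
  by (induction Ms) (auto simp: fold_gconv_add filter_gconv[OF assms(1)] assms(2))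

lemma kids_empty: "kids q = {#} \<longleftrightarrow> q = bullet"
  by (cases q) (auto simp: bullet_def)

lemma kids_bullet[simp]: "kids bullet = {#}" by (simp add: bullet_def)

definition Qc :: "contrib \<Rightarrow> bool" where "Qc x \<longleftrightarrow> snd (snd x) = {#}"

lemma Qc_add: "Qc (a + b) \<longleftrightarrow> Qc a \<and> Qc b" by (simp add: Qc_def)
lemma Qc_0: "Qc 0" by (simp add: Qc_def)

lemma filter_child_opts:
  assumes "filter_mset (\<lambda>x. snd (snd x) = bullet) X = {#(c, {#}, bullet)#}"
  shows "filter_mset Qc (child_opts X) = {#({#c#}, {#}, {#})#}"
proof -
  have 1: "filter_mset Qc (image_mset (\<lambda>(rc, os, q). ({#rc#}, os, kids q)) X)
     = image_mset (\<lambda>(rc, os, q). ({#rc#}, os, kids q)) (filter_mset (\<lambda>x. snd (snd x) = bullet) X)"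
    by (simp add: filter_mset_image_mset Qc_def split_beta kids_empty)
  have 2: "filter_mset Qc (image_mset (\<lambda>(rc, os, q). ({#}, close_comp rc os, {#q#})) X) = {#}"
    by (simp add: filter_mset_image_mset Qc_def split_beta)
  show ?thesis using 1 2 assms by (simp add: child_opts_def)
qed

lemma fold_singles: "fold_mset gconv {#0#} (image_mset (\<lambda>c. {#({#c#}, {#}, {#}) :: contrib#}) cs) = {#(cs, {#}, {#})#}"
  by (induction cs) (auto simp: fold_gconv_add zero_prod_def)

lemma sf_bullet: "filter_mset (\<lambda>x. snd (snd x) = bullet) (sf t) = {#(t, {#}, bullet)#}"
proof (induction t)
  case (Node cs)
  let ?f = "\<lambda>(rk, os, qk). (Node rk, os, Node qk)"
  have eqf: "(\<lambda>x. snd (snd (?f x)) = bullet) = Qc"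
    by (auto simp: fun_eq_iff Qc_def bullet_def split_beta)
  have "image_mset (filter_mset Qc) (image_mset (\<lambda>c. child_opts (sf c)) cs)
      = image_mset (\<lambda>c. {#({#c#}, {#}, {#}) :: contrib#}) cs"
    using Node by (auto simp: multiset.map_comp comp_def intro!: image_mset_cong filter_child_opts)
  then have "filter_mset Qc (combine (image_mset (\<lambda>c. child_opts (sf c)) cs)) = {#(cs, {#}, {#})#}"
    by (simp add: combine_alt filter_fold[OF Qc_add Qc_0] fold_singles)
  then have "filter_mset (\<lambda>x. snd (snd x) = bullet) (image_mset ?f (combine (image_mset (\<lambda>c. child_opts (sf c)) cs)))
     = image_mset ?f {#(cs, {#}, {#})#}"
    by (simp only: filter_mset_image_mset eqf)
  then show ?case by (simp add: bullet_def)
qed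

definition Xt :: "tree \<Rightarrow> (tree multiset \<times> tree multiset) multiset" where
  "Xt t = image_mset (\<lambda>(s, q). (s, {#q#})) (phi_tree t)"

lemma Phi_alt: "Phi F = fold_mset gconv {#0#} (image_mset Xt F)"
  by (simp add: Phi_def pconv_eq zero_prod_def Xt_def[abs_def])

lemma Phi_plus: "Phi (F + G) = gconv (Phi F) (Phi G)"
  by (simp add: Phi_alt fold_gconv_plus)

lemma Phi_empty: "Phi {#} = {#({#}, {#})#}"
  by (simp add: Phi_alt zero_prod_def)

lemma Phi_single: "Phi {#t#} = Xt t"
  by (simp add: Phi_alt fold_gconv_add)

lemma Phi_size: "x \<in># Phi F \<Longrightarrow> size (snd x) = size F"
proof (induction F arbitrary: x)
  case empty then show ?case by (simp add: Phi_empty)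
next
  case (add t F)
  have "Phi (add_mset t F) = gconv (Xt t) (Phi F)"
    using Phi_plus[of "{#t#}" F] by (simp add: Phi_single)
  with add.prems obtain a b where "a \<in># Xt t" "b \<in># Phi F" "x = a + b"
    by (auto dest: gconv_mem)
  moreover have "size (snd a) = 1" using \<open>a \<in># Xt t\<close> by (auto simp: Xt_def)
  ultimately show ?case using add.IH by simp
qed

lemma sum_filter: "sum_mset (image_mset (\<lambda>x. if P x then g x else 0) M) = sum_mset (image_mset g (filter_mset P M))"
  by (induction M) auto

lemma star_single:
  assumes "\<And>q. b {#q#} = (if q = bullet then 1 else 0)"
  shows "star \<phi> b {#t#} = \<phi> (tree_H t)"
proof -
  have "star \<phi> b {#t#} = sum_mset (image_mset (\<lambda>(s, q). \<phi> s * b {#q#}) (phi_tree t))"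
    by (auto simp: star_def Phi_single Xt_def multiset.map_comp comp_def split_beta intro!: arg_cong[where f=sum_mset] image_mset_cong)
  also have "\<dots> = sum_mset (image_mset (\<lambda>x. if snd x = bullet then \<phi> (fst x) else 0) (phi_tree t))"
    by (auto simp: assms split_beta intro!: arg_cong[where f=sum_mset] image_mset_cong)
  also have "\<dots> = sum_mset (image_mset (\<lambda>x. \<phi> (fst x)) (filter_mset (\<lambda>x. snd x = bullet) (phi_tree t)))"
    by (rule sum_filter)
  also have "filter_mset (\<lambda>x. snd x = bullet) (phi_tree t) = {#(tree_H t, bullet)#}"
    by (simp add: phi_tree_def filter_mset_image_mset split_beta sf_bullet[simplified]
         close_comp_def tree_H_def)
  finally show ?thesis by simp
qed


lemma H_monomial_plus: "H_monomial (M + N) \<longleftrightarrow> H_monomial M \<and> H_monomial N"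
  by (auto simp: H_monomial_def)

lemma char_mult: "character_H \<phi> \<Longrightarrow> \<phi> (M + N) = \<phi> M * \<phi> N"
  unfolding character_H_def by (metis H_monomial_plus mult_zero_left mult_zero_right)

lemma star_alt: "star \<phi> b F = sum_mset (image_mset (\<lambda>x. \<phi> (fst x) * b (snd x)) (Phi F))"
  unfolding star_def case_prod_beta' ..

lemma star_mult:
  assumes "character_H \<phi>" "\<And>F G. b (F + G) = b F * b G"
  shows "star \<phi> b (F + G) = star \<phi> b F * star \<phi> b G"
  unfolding star_alt Phi_plus
  by (rule sum_gconv) (simp add: char_mult[OF assms(1)] assms(2) algebra_simps)

lemma star_empty: "star \<phi> b {#} = \<phi> {#} * b {#}"
  by (simp add: star_alt Phi_empty)

lemma delta_char_mult: "delta_char (F + G) = delta_char F * delta_char G"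
  by (auto simp: delta_char_def)

lemma delta_char_single: "delta_char {#q#} = (if q = bullet then 1 else 0)"
  by (simp add: delta_char_def)

lemma delta_bullet_single: "delta_bullet {#q#} = (if q = bullet then 1 else 0)"
  by (simp add: delta_bullet_def)

lemma charH_eq:
  assumes "character_H \<phi>1" "character_H \<phi>2" "\<forall>t. \<phi>1 (tree_H t) = \<phi>2 (tree_H t)"
  shows "\<phi>1 = \<phi>2"
proof
  fix M show "\<phi>1 M = \<phi>2 M"
  proof (induction M)
    case empty then show ?case using assms by (simp add: character_H_def)
  next
    case (add t M)
    show ?case
    proof (cases "t = bullet")
      case True
      then have "\<not> H_monomial (add_mset t M)" by (simp add: H_monomial_def)
      then show ?thesis using assms by (simp add: character_H_def)
    next
      case False
      have "\<phi>1 (add_mset t M) = \<phi>1 {#t#} * \<phi>1 M" "\<phi>2 (add_mset t M) = \<phi>2 {#t#} * \<phi>2 M"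
        using char_mult[OF assms(1), of "{#t#}" M] char_mult[OF assms(2), of "{#t#}" M] by simp_all
      moreover have "\<phi>1 {#t#} = \<phi>2 {#t#}" using assms(3)[rule_format, of t] False by (simp add: tree_H_def)
      ultimately show ?thesis using add by simp
    qed
  qed
qed

definition mkphi :: "(tree multiset \<Rightarrow> 'k::field) \<Rightarrow> tree multiset \<Rightarrow> 'k" where
  "mkphi x M = (if H_monomial M then prod_mset (image_mset (\<lambda>t. x {#t#}) M) else 0)"

lemma mkphi_char: "character_H (mkphi x)"
  by (auto simp: character_H_def mkphi_def H_monomial_plus) (simp add: H_monomial_def)

lemma mkphi_tree: assumes "x {#bullet#} = 1" shows "mkphi x (tree_H t) = x {#t#}"
proof (cases "t = bullet")
  case True then show ?thesis using assms by (simp add: mkphi_def tree_H_def H_monomial_def)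
next
  case False then show ?thesis by (simp add: mkphi_def tree_H_def H_monomial_def)
qed

lemma bij_gen:
  fixes f :: "(tree multiset \<Rightarrow> 'k::field) \<Rightarrow> tree multiset \<Rightarrow> 'k"
  assumes "\<And>\<phi>. character_H \<phi> \<Longrightarrow> f \<phi> \<in> T \<and> (\<forall>t. f \<phi> {#t#} = \<phi> (tree_H t))"
  and "\<And>x y. x \<in> T \<Longrightarrow> y \<in> T \<Longrightarrow> (\<forall>t. x {#t#} = y {#t#}) \<Longrightarrow> x = y"
  and "\<And>x. x \<in> T \<Longrightarrow> x {#bullet#} = 1"
  shows "bij_betw f {\<phi>. character_H \<phi>} T"
  unfolding bij_betw_def
proof
  show "inj_on f {\<phi>. character_H \<phi>}"
  proof (rule inj_onI)
    fix p q assume "p \<in> {\<phi>. character_H \<phi>}" "q \<in> {\<phi>. character_H \<phi>}" "f p = f q"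
    then show "p = q" using assms(1)[of p] assms(1)[of q] by (intro charH_eq) auto
  qed
  show "f ` {\<phi>. character_H \<phi>} = T"
  proof
    show "f ` {\<phi>. character_H \<phi>} \<subseteq> T" using assms(1) by auto
    show "T \<subseteq> f ` {\<phi>. character_H \<phi>}"
    proof
      fix x assume x: "x \<in> T"
      have "f (mkphi x) = x"
        using assms(1)[OF mkphi_char, of x] x mkphi_tree[of x, OF assms(3)[OF x]] by (intro assms(2)) auto
      then show "x \<in> f ` {\<phi>. character_H \<phi>}" using mkphi_char[of x] by (metis imageI mem_Collect_eq)
    qed
  qed
qed

lemma inf_zero: assumes "infinitesimal_character_CK \<beta>" shows "\<beta> {#} = 0"
proof -
  have "\<beta> ({#} + {#}) = \<beta> {#} * eps_CK {#} + eps_CK {#} * \<beta> {#}"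
    using assms unfolding infinitesimal_character_CK_def by blast
  then have "\<beta> {#} + 0 = \<beta> {#} + \<beta> {#}" by (simp add: eps_CK_def)
  then show ?thesis by (metis add_left_cancel)
qed

lemma inf_big: "infinitesimal_character_CK \<beta> \<Longrightarrow> F \<noteq> {#} \<Longrightarrow> G \<noteq> {#} \<Longrightarrow> \<beta> (F + G) = 0"
  unfolding infinitesimal_character_CK_def by (simp add: eps_CK_def)

lemma inf_eq:
  assumes "infinitesimal_character_CK x" "infinitesimal_character_CK y" "\<forall>t. x {#t#} = y {#t#}"
  shows "x = y"
proof
  fix F show "x F = y F"
  proof (cases F)
    case empty then show ?thesis using inf_zero[OF assms(1)] inf_zero[OF assms(2)] by simp
  next
    case (add a F')
    show ?thesis
    proof (cases "F' = {#}")
      case True then show ?thesis using add assms by simp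
    next
      case False
      have "F = {#a#} + F'" using add by simp
      then show ?thesis using inf_big[OF assms(1) _ False, of "{#a#}"] inf_big[OF assms(2) _ False, of "{#a#}"] by simp
    qed
  qed
qed

lemma charCK_eq:
  assumes "character_CK x" "character_CK y" "\<forall>t. x {#t#} = y {#t#}"
  shows "x = y"
proof
  fix F show "x F = y F"
  proof (induction F)
    case empty then show ?case using assms by (simp add: character_CK_def)
  next
    case (add t F)
    have "add_mset t F = {#t#} + F" by simp
    then show ?case using add assms unfolding character_CK_def by metis
  qed
qed

lemma part1:
  fixes \<phi> :: "tree multiset \<Rightarrow> 'k::field"
  assumes "character_H \<phi>"
  shows "infinitesimal_character_CK (star \<phi> delta_bullet)"
  unfolding infinitesimal_character_CK_def
proof (intro allI)
  fix F G
  have s0: "star \<phi> delta_bullet {#} = 0" by (simp add: star_empty delta_bullet_def)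
  show "star \<phi> delta_bullet (F + G) = star \<phi> delta_bullet F * eps_CK G + eps_CK F * star \<phi> delta_bullet G"
  proof (cases "F = {#} \<or> G = {#}")
    case True then show ?thesis using s0 by (auto simp: eps_CK_def)
  next
    case False
    have "\<forall>x\<in>#Phi (F + G). \<phi> (fst x) * delta_bullet (snd x) = 0"
    proof
      fix x assume "x \<in># Phi (F + G)"
      then have "size (snd x) = size F + size G" using Phi_size by fastforce
      moreover have "size F \<ge> 1" "size G \<ge> 1" using False by (auto simp: Suc_le_eq nonempty_has_size)
      ultimately have "snd x \<noteq> {#bullet#}" by auto
      then show "\<phi> (fst x) * delta_bullet (snd x) = 0" by (simp add: delta_bullet_def)
    qed
    then have "star \<phi> delta_bullet (F + G) = 0"
      unfolding star_alt by (simp add: sum_mset.neutral)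
    then show ?thesis using False by (simp add: eps_CK_def)
  qed
qed

theorem mainTheorem8:
  shows
   "((\<forall>\<phi> :: tree multiset \<Rightarrow> 'k::field_char_0. character_H \<phi> \<longrightarrow>
        infinitesimal_character_CK (star \<phi> delta_bullet) \<and>
        (\<forall>t. star \<phi> delta_bullet {#t#} = \<phi> (tree_H t))) \<and>
     bij_betw (\<lambda>\<phi>. star \<phi> delta_bullet)
       {\<phi> :: tree multiset \<Rightarrow> 'k. character_H \<phi>}
       {\<beta>. infinitesimal_character_CK \<beta> \<and> \<beta> {#bullet#} = 1})
  \<and>
    ((\<forall>\<phi> :: tree multiset \<Rightarrow> 'k. character_H \<phi> \<longrightarrow>
        character_CK (star \<phi> delta_char) \<and>
        (\<forall>t. star \<phi> delta_char {#t#} = \<phi> (tree_H t))) \<and>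
     bij_betw (\<lambda>\<phi>. star \<phi> delta_char)
       {\<phi> :: tree multiset \<Rightarrow> 'k. character_H \<phi>}
       {b. character_CK b \<and> b {#bullet#} = 1})"
proof -
  have A1: "\<forall>\<phi> :: tree multiset \<Rightarrow> 'k::field_char_0. character_H \<phi> \<longrightarrow>
        infinitesimal_character_CK (star \<phi> delta_bullet) \<and>
        (\<forall>t. star \<phi> delta_bullet {#t#} = \<phi> (tree_H t))"
    using part1 star_single[OF delta_bullet_single] by blast
  have B1: "bij_betw (\<lambda>\<phi>. star \<phi> delta_bullet)
       {\<phi> :: tree multiset \<Rightarrow> 'k. character_H \<phi>}
       {\<beta>. infinitesimal_character_CK \<beta> \<and> \<beta> {#bullet#} = 1}"
  proof (rule bij_gen)
    fix \<phi> :: "tree multiset \<Rightarrow> 'k" assume c: "character_H \<phi>"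
    then have "star \<phi> delta_bullet {#bullet#} = 1"
      using A1 by (simp add: tree_H_def character_H_def)
    then show "star \<phi> delta_bullet \<in> {\<beta>. infinitesimal_character_CK \<beta> \<and> \<beta> {#bullet#} = 1} \<and>
      (\<forall>t. star \<phi> delta_bullet {#t#} = \<phi> (tree_H t))" using A1 c by blast
  qed (auto intro: inf_eq)
  have A2: "\<forall>\<phi> :: tree multiset \<Rightarrow> 'k. character_H \<phi> \<longrightarrow>
        character_CK (star \<phi> delta_char) \<and>
        (\<forall>t. star \<phi> delta_char {#t#} = \<phi> (tree_H t))"
  proof (intro allI impI conjI)
    fix \<phi> :: "tree multiset \<Rightarrow> 'k" assume c: "character_H \<phi>"
    show "character_CK (star \<phi> delta_char)"
    proof -
      have "star \<phi> delta_char {#} = 1" using c by (simp add: star_empty delta_char_def character_H_def)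
      then show ?thesis using star_mult[OF c delta_char_mult] by (simp add: character_CK_def)
    qed
    fix t show "star \<phi> delta_char {#t#} = \<phi> (tree_H t)"
      using star_single[OF delta_char_single] by blast
  qed
  have B2: "bij_betw (\<lambda>\<phi>. star \<phi> delta_char)
       {\<phi> :: tree multiset \<Rightarrow> 'k. character_H \<phi>}
       {b. character_CK b \<and> b {#bullet#} = 1}"
  proof (rule bij_gen)
    fix \<phi> :: "tree multiset \<Rightarrow> 'k" assume c: "character_H \<phi>"
    then have "star \<phi> delta_char {#bullet#} = 1"
      using A2 by (simp add: tree_H_def character_H_def)
    then show "star \<phi> delta_char \<in> {b. character_CK b \<and> b {#bullet#} = 1} \<and>
      (\<forall>t. star \<phi> delta_char {#t#} = \<phi> (tree_H t))" using A2 c by blast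
  qed (auto intro: charCK_eq)
  show ?thesis using A1 B1 A2 B2 by blast
qed

end
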